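(* Let $T$ be a reducing triangulation. Any walk in $T$ whose turn sequence has the form $2\,3^*\,2$ contains a $2_r$-turn. Any walk in $T$ whose turn sequence has the form $2\,3^*\,4$ or $4\,3^*\,2$ contains a $2_r$-turn or a $4_r$-turn.
   Context: A triangulation is an embedded graph whose faces are all open disks bounded by three edge-sides. A reducing triangulation $T$ of an oriented surface without boundary is a triangulation in which every vertex has degree at least $8$ and each triangle is colored red or blue so that adjacent triangles have different colors. It may be infinite, for instance when lifted to a covering space together with its colors. Suppose a walk traverses a directed edge $e$ into a vertex $v$ and then leaves $v$ along a directed edge $e'$. This occurrence of $v$ makes a $k$-turn ($k\ge 0$) if exactly $k$ triangles around $v$ lie to the left of the length-two walk $e\,e'$, between $e$ and $e'$ in the cyclic order around $v$. It makes a $-k$-turn ($k\ge 1$) if exactly $k$ triangles lie to its right. A turn is named by an integer in $\{-3,\dots,3\}$ when possible, which is unambiguous since degrees are at least $8$; otherwise it is named by the positive integer. A $k_b$-turn (resp. $k_r$-turn) is a $k$-turn in which the triangle to the left of $e$ is blue (resp. red). The turn sequence of a walk is the sequence of turns made at its interior vertices. Here $3^*$ denotes any number $\ge 0$ of consecutive $3$'s. *)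

theory Defs
  imports Main
begin

text \<open>Combinatorial model of an (possibly infinite) triangulation of an oriented
surface without boundary: a set of darts (directed edges) of type 'd,
 sigma: next dart counterclockwise around the tail vertex (a bijection),
 alpha: reversal of a dart (fixed-point-free involution).
The face to the left of a dart d is the corner (d, sigma d) at its tail; the next
dart along the boundary of that face is  face_next = inv sigma (alpha d).
Colours are attached to darts: col d is the colour of the triangle to the left of d.\<close>

datatype colour = Red | Blue

definition vorbit :: "('d \<Rightarrow> 'd) \<Rightarrow> 'd \<Rightarrow> 'd set" where
  "vorbit \<sigma> d = range (\<lambda>n. (\<sigma> ^^ n) d)"

definition degree :: "('d \<Rightarrow> 'd) \<Rightarrow> 'd \<Rightarrow> nat" where
  "degree \<sigma> d = card (vorbit \<sigma> d)"

definition face_next :: "('d \<Rightarrow> 'd) \<Rightarrow> ('d \<Rightarrow> 'd) \<Rightarrow> 'd \<Rightarrow> 'd" where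
  "face_next \<sigma> \<alpha> d = inv \<sigma> (\<alpha> d)"

definition reducing_triangulation ::
  "('d \<Rightarrow> 'd) \<Rightarrow> ('d \<Rightarrow> 'd) \<Rightarrow> ('d \<Rightarrow> colour) \<Rightarrow> bool" where
  "reducing_triangulation \<sigma> \<alpha> col \<longleftrightarrow>
     bij \<sigma> \<and>
     (\<forall>d. \<alpha> (\<alpha> d) = d \<and> \<alpha> d \<noteq> d) \<and>
     (\<forall>d. face_next \<sigma> \<alpha> (face_next \<sigma> \<alpha> (face_next \<sigma> \<alpha> d)) = d
          \<and> face_next \<sigma> \<alpha> d \<noteq> d) \<and>
     (\<forall>d. finite (vorbit \<sigma> d) \<and> degree \<sigma> d \<ge> 8) \<and>
     (\<forall>d. col (face_next \<sigma> \<alpha> d) = col d \<and> col (\<alpha> d) \<noteq> col d)"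

text \<open>A walk is a nonempty list of darts, the head of each being the tail of the next.\<close>
definition is_walk :: "('d \<Rightarrow> 'd) \<Rightarrow> ('d \<Rightarrow> 'd) \<Rightarrow> 'd list \<Rightarrow> bool" where
  "is_walk \<sigma> \<alpha> ds \<longleftrightarrow> ds \<noteq> [] \<and>
     (\<forall>i. Suc i < length ds \<longrightarrow> \<alpha> (ds ! i) \<in> vorbit \<sigma> (ds ! Suc i))"

text \<open>Number of triangles to the left of the length-two walk e e' (e enters v, e' leaves v).\<close>
definition left_count :: "('d \<Rightarrow> 'd) \<Rightarrow> ('d \<Rightarrow> 'd) \<Rightarrow> 'd \<Rightarrow> 'd \<Rightarrow> nat" where
  "left_count \<sigma> \<alpha> e e' = (LEAST k. (\<sigma> ^^ k) e' = \<alpha> e)"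

definition turn_name :: "('d \<Rightarrow> 'd) \<Rightarrow> ('d \<Rightarrow> 'd) \<Rightarrow> 'd \<Rightarrow> 'd \<Rightarrow> int" where
  "turn_name \<sigma> \<alpha> e e' =
     (let k = left_count \<sigma> \<alpha> e e'; n = degree \<sigma> e' in
      if k \<le> 3 then int k else if n - k \<le> 3 then - int (n - k) else int k)"

definition turn_seq :: "('d \<Rightarrow> 'd) \<Rightarrow> ('d \<Rightarrow> 'd) \<Rightarrow> 'd list \<Rightarrow> int list" where
  "turn_seq \<sigma> \<alpha> ds = map (\<lambda>i. turn_name \<sigma> \<alpha> (ds ! i) (ds ! Suc i)) [0..<length ds - 1]"

text \<open>The walk contains a j_r-turn: a j-turn whose incoming dart has a red triangle on its left.\<close>
definition has_red_turn ::
  "('d \<Rightarrow> 'd) \<Rightarrow> ('d \<Rightarrow> 'd) \<Rightarrow> ('d \<Rightarrow> colour) \<Rightarrow> 'd list \<Rightarrow> int \<Rightarrow> bool" where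
  "has_red_turn \<sigma> \<alpha> col ds j \<longleftrightarrow>
     (\<exists>i. Suc i < length ds \<and> turn_name \<sigma> \<alpha> (ds ! i) (ds ! Suc i) = j \<and> col (ds ! i) = Red)"

end

theory Submission
  imports Defs
begin

lemma col_sigma:
  assumes "reducing_triangulation \<sigma> \<alpha> col"
  shows "col (\<sigma> d) \<noteq> col d"
proof -
  have b: "bij \<sigma>" and a: "\<And>d. \<alpha> (\<alpha> d) = d" and c: "\<And>d. col (face_next \<sigma> \<alpha> d) = col d \<and> col (\<alpha> d) \<noteq> col d"
    using assms unfolding reducing_triangulation_def by auto
  have "face_next \<sigma> \<alpha> (\<alpha> (\<sigma> d)) = d"
    unfolding face_next_def a using b by (simp add: bij_is_inj)
  then have "col d = col (\<alpha> (\<sigma> d))" using c by metis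
  then show ?thesis using c by metis
qed

lemma col_pow:
  assumes "reducing_triangulation \<sigma> \<alpha> col"
  shows "col ((\<sigma> ^^ k) d) = col d \<longleftrightarrow> even k"
proof (induction k)
  case 0 then show ?case by simp
next
  case (Suc k)
  have "col (\<sigma> ((\<sigma> ^^ k) d)) \<noteq> col ((\<sigma> ^^ k) d)" using col_sigma[OF assms] .
  then show ?case using Suc by (cases "col (\<sigma> ((\<sigma> ^^ k) d))"; cases "col ((\<sigma> ^^ k) d)"; cases "col d"; auto)
qed

lemma lc_of_name:
  assumes "turn_name \<sigma> \<alpha> e e' = j" "j \<ge> 2"
  shows "left_count \<sigma> \<alpha> e e' = nat j"
  using assms unfolding turn_name_def Let_def by (auto split: if_splits)

lemma step_col:
  assumes rt: "reducing_triangulation \<sigma> \<alpha> col"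
    and w: "\<alpha> e \<in> vorbit \<sigma> e'"
    and t: "turn_name \<sigma> \<alpha> e e' = j" "j \<ge> 2"
  shows "col e' = col e \<longleftrightarrow> odd (nat j)"
proof -
  have lc: "left_count \<sigma> \<alpha> e e' = nat j" using lc_of_name[OF t] .
  from w obtain n where "(\<sigma> ^^ n) e' = \<alpha> e" unfolding vorbit_def by auto
  then have "(\<sigma> ^^ (LEAST k. (\<sigma> ^^ k) e' = \<alpha> e)) e' = \<alpha> e" by (rule LeastI)
  then have p: "(\<sigma> ^^ nat j) e' = \<alpha> e" using lc unfolding left_count_def by simp
  have ca: "col (\<alpha> e) \<noteq> col e" using rt unfolding reducing_triangulation_def by auto
  have "col ((\<sigma> ^^ nat j) e') = col e' \<longleftrightarrow> even (nat j)" using col_pow[OF rt] .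
  then show ?thesis using p ca by (cases "col e"; cases "col e'"; cases "col (\<alpha> e)"; auto)
qed

theorem lemma3p3:
  fixes \<sigma> \<alpha> :: "'d \<Rightarrow> 'd" and col :: "'d \<Rightarrow> colour" and ds :: "'d list" and m :: nat
  assumes "reducing_triangulation \<sigma> \<alpha> col"
    and "is_walk \<sigma> \<alpha> ds"
  shows "(turn_seq \<sigma> \<alpha> ds = [2] @ replicate m 3 @ [2] \<longrightarrow> has_red_turn \<sigma> \<alpha> col ds 2)
       \<and> ((turn_seq \<sigma> \<alpha> ds = [2] @ replicate m 3 @ [4] \<or> turn_seq \<sigma> \<alpha> ds = [4] @ replicate m 3 @ [2])
          \<longrightarrow> has_red_turn \<sigma> \<alpha> col ds 2 \<or> has_red_turn \<sigma> \<alpha> col ds 4)"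
proof -
  have ne: "ds \<noteq> []" and wk: "\<And>i. Suc i < length ds \<Longrightarrow> \<alpha> (ds ! i) \<in> vorbit \<sigma> (ds ! Suc i)"
    using assms(2) unfolding is_walk_def by auto
  have gen: "col (ds ! 0) \<noteq> col (ds ! Suc m)"
    if ts: "turn_seq \<sigma> \<alpha> ds = [a] @ replicate m 3 @ [b]" and ab: "a \<in> {2,4}"
    and L: "length ds = m + 3"
    for a b :: int
  proof -
    have tn: "turn_name \<sigma> \<alpha> (ds ! i) (ds ! Suc i) = ([a] @ replicate m 3 @ [b]) ! i"
      if "i < m + 2" for i
      proof -
      have "turn_seq \<sigma> \<alpha> ds ! i = turn_name \<sigma> \<alpha> (ds ! i) (ds ! Suc i)"
        unfolding turn_seq_def using that L by (simp del: upt_Suc)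
      then show ?thesis using ts by simp
    qed
    have first: "col (ds ! 1) \<noteq> col (ds ! 0)"
    proof -
      have "turn_name \<sigma> \<alpha> (ds ! 0) (ds ! Suc 0) = a" using tn[of 0] by simp
      then have "col (ds ! Suc 0) = col (ds ! 0) \<longleftrightarrow> odd (nat a)"
        using step_col[OF assms(1) wk[of 0]] ab L by auto
      then show ?thesis using ab by auto
    qed
    have mid: "col (ds ! Suc i) = col (ds ! 1)" if "i \<le> m" for i
      using that
    proof (induction i)
      case 0 then show ?case by simp
    next
      case (Suc i)
      have "([a] @ replicate m 3 @ [b]) ! Suc i = 3" using Suc.prems
        by (simp add: nth_append)
      then have "turn_name \<sigma> \<alpha> (ds ! Suc i) (ds ! Suc (Suc i)) = 3" using tn[of "Suc i"] Suc.prems by simp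
      then have "col (ds ! Suc (Suc i)) = col (ds ! Suc i) \<longleftrightarrow> odd (nat 3)"
        using step_col[OF assms(1) wk[of "Suc i"]] Suc.prems L by auto
      then show ?case using Suc by simp
    qed
    show ?thesis using first mid[of m] by simp
  qed
  have L: "length ds = m + 3" if "turn_seq \<sigma> \<alpha> ds = [a] @ replicate m 3 @ [b]" for a b :: int
  proof -
    have "length (turn_seq \<sigma> \<alpha> ds) = length ds - 1" unfolding turn_seq_def by simp
    then show ?thesis using that ne by (cases ds) auto
  qed
  have tn0: "turn_name \<sigma> \<alpha> (ds ! 0) (ds ! Suc 0) = a"
    and tnl: "turn_name \<sigma> \<alpha> (ds ! Suc m) (ds ! Suc (Suc m)) = b"
    if ts: "turn_seq \<sigma> \<alpha> ds = [a] @ replicate m 3 @ [b]" for a b :: int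
  proof -
    have Lm: "length ds = m + 3" using L[OF ts] .
    have tn: "turn_name \<sigma> \<alpha> (ds ! i) (ds ! Suc i) = ([a] @ replicate m 3 @ [b]) ! i"
      if "i < m + 2" for i
      proof -
      have "turn_seq \<sigma> \<alpha> ds ! i = turn_name \<sigma> \<alpha> (ds ! i) (ds ! Suc i)"
        unfolding turn_seq_def using that Lm by (simp del: upt_Suc)
      then show ?thesis using ts by simp
    qed
    show "turn_name \<sigma> \<alpha> (ds ! 0) (ds ! Suc 0) = a" using tn[of 0] by simp
    show "turn_name \<sigma> \<alpha> (ds ! Suc m) (ds ! Suc (Suc m)) = b" using tn[of "Suc m"] by (simp add: nth_append)
  qed
  have red: "has_red_turn \<sigma> \<alpha> col ds a \<or> has_red_turn \<sigma> \<alpha> col ds b"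
    if ts: "turn_seq \<sigma> \<alpha> ds = [a] @ replicate m 3 @ [b]" and ab: "a \<in> {2,4}" for a b :: int
  proof -
    have Lm: "length ds = m + 3" using L[OF ts] .
    have d: "col (ds ! 0) \<noteq> col (ds ! Suc m)" using gen[OF ts ab Lm] .
    show ?thesis
    proof (cases "col (ds ! 0)")
      case Red then show ?thesis unfolding has_red_turn_def using tn0[OF ts] Lm by (intro disjI1 exI[of _ 0]) auto
    next
      case Blue then have "col (ds ! Suc m) = Red" using d by (cases "col (ds ! Suc m)") auto
      then show ?thesis unfolding has_red_turn_def using tnl[OF ts] Lm by (intro disjI2 exI[of _ "Suc m"]) auto
    qed
  qed
  show ?thesis using red[of 2 2] red[of 2 4] red[of 4 2] by auto
qed

end
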